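(* Let $D_\infty=\langle s,t\mid t^2,\ tsts\rangle$. If $\alpha:D_\infty\curvearrowright X$ is a minimal continuous action on an infinite compact Hausdorff space $X$, then $\alpha$ is topologically free, i.e. for every $g\ne e$ in $D_\infty$ the set $\{x\in X: gx\ne x\}$ is dense in $X$. *)

theory Defs
  imports "HOL-Analysis.Analysis" "HOL-Algebra.Group_Action"
begin

text \<open>Concrete model of the infinite dihedral group
  D_inf = < s, t | t^2, tsts >: the element (n, False) is s^n and (n, True) is s^n t.\<close>

definition Dinf :: "(int \<times> bool) monoid" where
  "Dinf = \<lparr>carrier = UNIV,
           mult = (\<lambda>(n, a) (m, b). (n + (if a then - m else m), a \<noteq> b)),
           one = (0, False)\<rparr>"

definition Dinf_s :: "int \<times> bool" where "Dinf_s = (1, False)"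
definition Dinf_t :: "int \<times> bool" where "Dinf_t = (0, True)"

lemma Dinf_relations:
  "Dinf_t \<otimes>\<^bsub>Dinf\<^esub> Dinf_t = \<one>\<^bsub>Dinf\<^esub>"
  "Dinf_t \<otimes>\<^bsub>Dinf\<^esub> Dinf_s \<otimes>\<^bsub>Dinf\<^esub> Dinf_t \<otimes>\<^bsub>Dinf\<^esub> Dinf_s = \<one>\<^bsub>Dinf\<^esub>"
  by (simp_all add: Dinf_def Dinf_s_def Dinf_t_def)

lemma Dinf_group: "group Dinf"
  unfolding Dinf_def
  apply (rule groupI)
      apply (auto simp: algebra_simps)
  subgoal for a b by (rule exI[of _ "if b then a else - a"]) auto
  done

end

theory Submission
  imports Defs
begin

lemma D_comp:
  assumes "group_action Dinf UNIV \<alpha>"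
  shows "\<alpha> (n + (if a then - m else m), a \<noteq> b) x = \<alpha> (n, a) (\<alpha> (m, b) x)"
proof -
  have "\<alpha> ((n,a) \<otimes>\<^bsub>Dinf\<^esub> (m,b)) x = \<alpha> (n, a) (\<alpha> (m, b) x)"
    using group_action.composition_rule[OF assms, of x "(n,a)" "(m,b)"] by (simp add: Dinf_def)
  then show ?thesis by (simp add: Dinf_def)
qed

lemma D_one:
  assumes "group_action Dinf UNIV \<alpha>"
  shows "\<alpha> (0, False) x = x"
proof -
  have "(\<lambda>x\<in>UNIV. x) = \<alpha> \<one>\<^bsub>Dinf\<^esub>" using group_action.id_eq_one[OF assms] .
  then have "\<alpha> (0,False) = (\<lambda>x\<in>UNIV. x)" by (simp add: Dinf_def)
  then show ?thesis by simp
qed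

lemma D_inj:
  assumes "group_action Dinf UNIV \<alpha>" "\<alpha> g x = \<alpha> g y"
  shows "x = y"
  using group_action.inj_prop[OF assms(1), of g] assms(2)
  by (simp add: Dinf_def inj_on_def)

lemma D_rot_case:
  fixes \<alpha> :: "int \<times> bool \<Rightarrow> 'a::t2_space \<Rightarrow> 'a"
  assumes action: "group_action Dinf UNIV \<alpha>"
    and inf: "infinite (UNIV :: 'a set)"
    and minimal: "\<forall>x. closure (orbit Dinf \<alpha> x) = UNIV"
    and U: "open U" "U \<noteq> {}" "\<forall>y\<in>U. \<alpha> (n, False) y = y" and n: "n \<noteq> 0"
  shows False
proof -
  note comp = D_comp[OF action] and one = D_one[OF action] and inj = D_inj[OF action]
  have triv: "\<alpha> (n, False) y = y" for y
  proof -
    have "U \<inter> orbit Dinf \<alpha> y \<noteq> {}"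
      using open_Int_closure_eq_empty[OF U(1), of "orbit Dinf \<alpha> y"] minimal U(2) by auto
    then obtain k b where kb: "\<alpha> (k, b) y \<in> U" by (auto simp: orbit_def)
    define c where "c = (if b then - n else n)"
    have "\<alpha> (n, False) (\<alpha> (k, b) y) = \<alpha> (k, b) y" using U(3) kb by blast
    moreover have "\<alpha> (n, False) (\<alpha> (k, b) y) = \<alpha> (n + k, b) y" using comp[of n False k b y] by simp
    moreover have "\<alpha> (k, b) (\<alpha> (c, False) y) = \<alpha> (n + k, b) y"
      using comp[of k b c False y] by (cases b) (simp_all add: c_def add.commute)
    ultimately have "\<alpha> (k, b) (\<alpha> (c, False) y) = \<alpha> (k, b) y" by simp
    then have cy: "\<alpha> (c, False) y = y" by (rule inj)
    show ?thesis
    proof (cases b)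
      case False then show ?thesis using cy by (simp add: c_def)
    next
      case True
      have "\<alpha> (n, False) (\<alpha> (- n, False) y) = \<alpha> (0, False) y" using comp[of n False "-n" False y] by simp
      then show ?thesis using cy True one by (simp add: c_def)
    qed
  qed
  have mult: "\<alpha> (n * q, False) y = y" for q y
  proof (induction q rule: int_induct[where k=0])
    case base then show ?case using one by simp
  next
    case (step1 i)
    have "\<alpha> (n * (i+1), False) y = \<alpha> (n, False) (\<alpha> (n * i, False) y)"
      using comp[of n False "n*i" False y] by (simp add: algebra_simps)
    then show ?case using step1 triv by simp
  next
    case (step2 i)
    have "\<alpha> (n * i, False) y = \<alpha> (n, False) (\<alpha> (n * (i - 1), False) y)"
      using comp[of n False "n*(i-1)" False y] by (simp add: algebra_simps)
    then show ?case using step2 triv by simp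
  qed
  fix x :: 'a
  have red: "\<alpha> (k, b) x = \<alpha> (k mod n, b) x" for k b
  proof -
    have "\<alpha> (n * (k div n) + k mod n, b) x = \<alpha> (n * (k div n), False) (\<alpha> (k mod n, b) x)"
      using comp[of "n * (k div n)" False "k mod n" b x] by simp
    then show ?thesis using mult by simp
  qed
  define S where "S = {- \<bar>n\<bar>..\<bar>n\<bar>} \<times> (UNIV :: bool set)"
  have fS: "finite S" by (simp add: S_def)
  have "orbit Dinf \<alpha> x \<subseteq> (\<lambda>g. \<alpha> g x) ` S"
  proof
    fix z assume "z \<in> orbit Dinf \<alpha> x"
    then obtain k b where z: "z = \<alpha> (k, b) x" by (auto simp: orbit_def)
    have "k mod n \<in> {- \<bar>n\<bar>..\<bar>n\<bar>}" using n
    proof (cases "n > 0")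
      case True then show ?thesis using pos_mod_sign[OF True, of k] pos_mod_bound[OF True, of k] by auto
    next
      case False then have "n < 0" using n by simp
      then show ?thesis using neg_mod_sign[OF \<open>n<0\<close>, of k] neg_mod_bound[OF \<open>n<0\<close>, of k] by auto
    qed
    then show "z \<in> (\<lambda>g. \<alpha> g x) ` S" using z red unfolding S_def by (intro image_eqI[of _ _ "(k mod n, b)"]) auto
  qed
  then have fo: "finite (orbit Dinf \<alpha> x)" using fS finite_subset by blast
  then have "closure (orbit Dinf \<alpha> x) = orbit Dinf \<alpha> x" by (simp add: closure_closed finite_imp_closed)
  then have "finite (UNIV :: 'a set)" using minimal fo by metis
  then show False using inf by simp
qed

lemma open_vimage_UNIV:
  assumes "continuous_on UNIV f" "open B"
  shows "open (f -` B)"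
  using assms continuous_on_open_vimage[OF open_UNIV, of f] by simp

lemma D_no_isolated:
  fixes \<alpha> :: "int \<times> bool \<Rightarrow> 'a::t2_space \<Rightarrow> 'a"
  assumes action: "group_action Dinf UNIV \<alpha>"
    and cont: "\<forall>g \<in> carrier Dinf. continuous_on UNIV (\<alpha> g)"
    and cpt: "compact (UNIV :: 'a set)"
    and inf: "infinite (UNIV :: 'a set)"
    and minimal: "\<forall>x. closure (orbit Dinf \<alpha> x) = UNIV"
    and op: "open {x::'a}"
  shows False
proof -
  have cov: "(UNIV::'a set) \<subseteq> (\<Union>g\<in>UNIV. \<alpha> g -` {x})"
  proof
    fix y :: 'a
    have "{x} \<inter> orbit Dinf \<alpha> y \<noteq> {}"
      using open_Int_closure_eq_empty[OF op, of "orbit Dinf \<alpha> y"] minimal by auto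
    then obtain g where "\<alpha> g y = x" unfolding orbit_def by blast
    then have "y \<in> \<alpha> g -` {x}" by simp
    then show "y \<in> (\<Union>g\<in>UNIV. \<alpha> g -` {x})" by (rule UN_I[OF UNIV_I])
  qed
  have opn: "open (\<alpha> g -` {x})" for g
    using open_vimage_UNIV[of "\<alpha> g" "{x}"] cont op by (simp add: Dinf_def)
  obtain C' where C': "finite C'" "(UNIV::'a set) \<subseteq> (\<Union>g\<in>C'. \<alpha> g -` {x})"
    using compactE_image[OF cpt, of UNIV "\<lambda>g. \<alpha> g -` {x}", OF opn cov] by metis
  have fin: "finite (\<alpha> g -` {x})" for g
  proof (rule finite_vimageI)
    show "inj (\<alpha> g)" using group_action.inj_prop[OF action, of g] by (simp add: Dinf_def)
  qed simp
  have "finite (\<Union>g\<in>C'. \<alpha> g -` {x})" using C'(1) fin by (intro finite_UN_I) 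
  then have "finite (UNIV::'a set)" using C'(2) by (rule finite_subset[rotated])
  then show False using inf by simp
qed

theorem proposition2p6:
  fixes \<alpha> :: "int \<times> bool \<Rightarrow> 'a::t2_space \<Rightarrow> 'a"
  assumes action: "group_action Dinf UNIV \<alpha>"
    and cont: "\<forall>g \<in> carrier Dinf. continuous_on UNIV (\<alpha> g)"
    and cpt: "compact (UNIV :: 'a set)"
    and inf: "infinite (UNIV :: 'a set)"
    and minimal: "\<forall>x. closure (orbit Dinf \<alpha> x) = UNIV"
  shows "\<forall>g \<in> carrier Dinf. g \<noteq> \<one>\<^bsub>Dinf\<^esub> \<longrightarrow> closure {x. \<alpha> g x \<noteq> x} = UNIV"
proof (intro ballI impI)
  note comp = D_comp[OF action] and one = D_one[OF action] and inj = D_inj[OF action]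
  fix g assume "g \<in> carrier Dinf" and gne: "g \<noteq> \<one>\<^bsub>Dinf\<^esub>"
  obtain n b where g: "g = (n, b)" by fastforce
  show "closure {x. \<alpha> g x \<noteq> x} = UNIV"
  proof (rule ccontr)
    assume "closure {x. \<alpha> g x \<noteq> x} \<noteq> UNIV"
    define U where "U = interior {x. \<alpha> g x = x}"
    have "- {x. \<alpha> g x \<noteq> x} = {x. \<alpha> g x = x}" by auto
    then have "U = - closure {x. \<alpha> g x \<noteq> x}"
      unfolding U_def using interior_complement[of "{x. \<alpha> g x \<noteq> x}"] by simp
    then have Une: "U \<noteq> {}" using \<open>closure {x. \<alpha> g x \<noteq> x} \<noteq> UNIV\<close> by auto
    have Uo: "open U" by (simp add: U_def)
    have Uf: "\<forall>y\<in>U. \<alpha> (n, b) y = y" using interior_subset[of "{x. \<alpha> g x = x}"] g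
      unfolding U_def by auto
    show False
    proof (cases b)
      case False
      then have "n \<noteq> 0" using gne g by (simp add: Dinf_def)
      then show False using D_rot_case[OF action inf minimal Uo Une, of n] Uf False by simp
    next
      case True
      obtain x where xU: "x \<in> U" using Une by blast
      have "U \<noteq> {x}" using D_no_isolated[OF action cont cpt inf minimal, of x] Uo by auto
      then have V: "U - {x} \<noteq> {}" using xU by auto
      have Vo: "open (U - {x})" using Uo by (simp add: open_Diff)
      have "(U - {x}) \<inter> orbit Dinf \<alpha> x \<noteq> {}"
        using open_Int_closure_eq_empty[OF Vo, of "orbit Dinf \<alpha> x"] minimal V by auto
      then obtain k c where kc: "\<alpha> (k, c) x \<in> U" "\<alpha> (k, c) x \<noteq> x"
        by (auto simp: orbit_def)
      have xfix: "\<alpha> (n, True) x = x" using Uf xU True by simp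
      have kT: "\<alpha> (k, True) x = \<alpha> (k - n, False) x"
        using comp[of "k - n" False n True x] xfix by simp
      obtain m where m: "\<alpha> (m, False) x \<in> U" "\<alpha> (m, False) x \<noteq> x"
      proof (cases c)
        case True then show ?thesis using that[of "k - n"] kc kT by simp
      next
        case False then show ?thesis using that[of k] kc by simp
      qed
      have m0: "m \<noteq> 0" using m one by auto
      define W where "W = U \<inter> \<alpha> (m, False) -` U"
      have Wo: "open W" unfolding W_def
        using open_vimage_UNIV[of "\<alpha> (m, False)" U] cont Uo by (simp add: Dinf_def open_Int)
      have Wne: "W \<noteq> {}" using xU m unfolding W_def by auto
      have Wf: "\<forall>y\<in>W. \<alpha> (2 * m, False) y = y"
      proof
        fix y assume "y \<in> W"
        then have y1: "\<alpha> (n, True) y = y" and y2: "\<alpha> (n, True) (\<alpha> (m, False) y) = \<alpha> (m, False) y"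
          using Uf True unfolding W_def by auto
        have "\<alpha> (n, True) (\<alpha> (m, False) y) = \<alpha> (n - m, True) y" using comp[of n True m False y] by simp
        also have "\<dots> = \<alpha> (- m, False) (\<alpha> (n, True) y)" using comp[of "-m" False n True y] by simp
        finally have e: "\<alpha> (m, False) y = \<alpha> (- m, False) y" using y1 y2 by simp
        have "\<alpha> (2 * m, False) y = \<alpha> (m, False) (\<alpha> (m, False) y)" using comp[of m False m False y] by simp
        also have "\<dots> = \<alpha> (m, False) (\<alpha> (- m, False) y)" using e by simp
        also have "\<dots> = y" using comp[of m False "-m" False y] one by simp
        finally show "\<alpha> (2 * m, False) y = y" .
      qed
      show False using D_rot_case[OF action inf minimal Wo Wne Wf] m0 by simp
    qed
  qed
qed

end
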